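(* Let $n\ge1$ and $B=(v_1,\dots,v_n)\in\mathrm{GL}_n(\mathbb{R})$. Define linear maps $L^\Phi_B: M_n(\mathbb{R})^2\to\mathcal{S}^2(\mathbb{R}^n)^n$ and $L^\Psi_B:\mathcal{S}^2(\mathbb{R}^n)^n\to\mathcal{S}^3(\mathbb{R}^n)^{n(n-1)/2}$ by $$L^\Phi_B(A',B')=\big(A'\circ Q_{v_i}-Q_{v_i}\circ(A',I)-Q_{v_i}\circ(I,A')+Q_{\omega_i}\big)_{1\le i\le n},$$ where $B'=(\omega_1,\dots,\omega_n)$ (columns), and $$L^\Psi_B(q_1,\dots,q_n)=\big([q_i,Q_{v_j}]-[q_j,Q_{v_i}]\big)_{1\le i<j\le n}.$$ Then $\ker L^\Psi_B=\operatorname{Im}L^\Phi_B$.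
   Context: $\mathcal{S}^r(\mathbb{R}^n)$ denotes the space of symmetric $r$-linear maps $(\mathbb{R}^n)^r\to\mathbb{R}^n$. $\langle\cdot,\cdot\rangle$ is the Euclidean inner product. For $v\in\mathbb{R}^n$, $Q_v\in\mathcal{S}^2(\mathbb{R}^n)$ is $Q_v(\xi,\eta)=\langle\xi,\eta\rangle v-\langle\xi,v\rangle\eta-\langle\eta,v\rangle\xi$. For $Q\in\mathcal{S}^2(\mathbb{R}^n)$ and $A,C\in M_n(\mathbb{R})$, $Q\circ(A,C)(\xi,\eta)=Q(A\xi,C\eta)$ and $A\circ Q(\xi,\eta)=A(Q(\xi,\eta))$. For $Q,Q'\in\mathcal{S}^2(\mathbb{R}^n)$, $[Q,Q']\in\mathcal{S}^3(\mathbb{R}^n)$ is $[Q,Q'](\xi,\eta,\theta)=\{Q(\xi,Q'(\eta,\theta))+Q(\eta,Q'(\theta,\xi))+Q(\theta,Q'(\xi,\eta))\}-\{Q'(\xi,Q(\eta,\theta))+Q'(\eta,Q(\theta,\xi))+Q'(\theta,Q(\xi,\eta))\}$. *)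

theory Defs
  imports "HOL-Analysis.Analysis"
begin

type_synonym 'n vecmap2 = "real^'n \<Rightarrow> real^'n \<Rightarrow> real^'n"
type_synonym 'n vecmap3 = "real^'n \<Rightarrow> real^'n \<Rightarrow> real^'n \<Rightarrow> real^'n"

text \<open>S^2(R^n): symmetric bilinear maps R^n x R^n -> R^n.\<close>
definition S2 :: "'n::finite vecmap2 set" where
  "S2 = {Q. bilinear Q \<and> (\<forall>x y. Q x y = Q y x)}"

text \<open>Q_v(xi,eta) = <xi,eta> v - <xi,v> eta - <eta,v> xi.\<close>
definition Qv :: "real^'n::finite \<Rightarrow> 'n vecmap2" where
  "Qv v = (\<lambda>\<xi> \<eta>. (\<xi> \<bullet> \<eta>) *\<^sub>R v - (\<xi> \<bullet> v) *\<^sub>R \<eta> - (\<eta> \<bullet> v) *\<^sub>R \<xi>)"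

text \<open>The bracket [Q,Q'] in S^3.\<close>
definition brk :: "'n::finite vecmap2 \<Rightarrow> 'n vecmap2 \<Rightarrow> 'n vecmap3" where
  "brk Q Q' = (\<lambda>\<xi> \<eta> \<theta>.
      (Q \<xi> (Q' \<eta> \<theta>) + Q \<eta> (Q' \<theta> \<xi>) + Q \<theta> (Q' \<xi> \<eta>))
    - (Q' \<xi> (Q \<eta> \<theta>) + Q' \<eta> (Q \<theta> \<xi>) + Q' \<theta> (Q \<xi> \<eta>)))"

text \<open>L^Phi_B(A',B'): the i-th component is
  A' o Q_{v_i} - Q_{v_i} o (A',I) - Q_{v_i} o (I,A') + Q_{omega_i},
  with v_i = i-th column of B and omega_i = i-th column of B'.\<close>
definition LPhi :: "real^'n^'n \<Rightarrow> real^'n^'n \<Rightarrow> real^'n^'n \<Rightarrow> ('n::finite \<Rightarrow> 'n vecmap2)" where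
  "LPhi B A' B' = (\<lambda>i \<xi> \<eta>.
      A' *v (Qv (column i B) \<xi> \<eta>)
    - Qv (column i B) (A' *v \<xi>) \<eta>
    - Qv (column i B) \<xi> (A' *v \<eta>)
    + Qv (column i B') \<xi> \<eta>)"

text \<open>L^Psi_B(q): component (i,j), used for i < j: [q_i,Q_{v_j}] - [q_j,Q_{v_i}].\<close>
definition LPsi :: "real^'n^'n \<Rightarrow> ('n::finite \<Rightarrow> 'n vecmap2) \<Rightarrow> 'n \<Rightarrow> 'n \<Rightarrow> 'n vecmap3" where
  "LPsi B q i j = (\<lambda>\<xi> \<eta> \<theta>. brk (q i) (Qv (column j B)) \<xi> \<eta> \<theta> - brk (q j) (Qv (column i B)) \<xi> \<eta> \<theta>)"

text \<open>Kernel of L^Psi_B as a subset of S^2(R^n)^n (components indexed by pairs i<j).\<close>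
definition kerLPsi :: "(real^('n::{finite,linorder}))^('n::{finite,linorder}) \<Rightarrow> (('n::{finite,linorder}) \<Rightarrow> ('n::{finite,linorder}) vecmap2) set" where
  "kerLPsi B = {q. (\<forall>i. q i \<in> S2) \<and> (\<forall>i j. i < j \<longrightarrow> LPsi B q i j = (\<lambda>\<xi> \<eta> \<theta>. 0))}"

text \<open>Image of L^Phi_B over M_n(R)^2.\<close>
definition imLPhi :: "real^'n^'n \<Rightarrow> ('n::finite \<Rightarrow> 'n vecmap2) set" where
  "imLPhi B = {LPhi B A' B' | A' B'. True}"

end

theory Submission imports Defs begin

definition Qg :: "'a::euclidean_space \<Rightarrow> 'a \<Rightarrow> 'a \<Rightarrow> 'a" where
  "Qg v = (\<lambda>\<xi> \<eta>. (\<xi> \<bullet> \<eta>) *\<^sub>R v - (\<xi> \<bullet> v) *\<^sub>R \<eta> - (\<eta> \<bullet> v) *\<^sub>R \<xi>)"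

definition brkg :: "('a::euclidean_space \<Rightarrow> 'a \<Rightarrow> 'a) \<Rightarrow> ('a \<Rightarrow> 'a \<Rightarrow> 'a) \<Rightarrow> 'a \<Rightarrow> 'a \<Rightarrow> 'a \<Rightarrow> 'a" where
  "brkg Q Q' = (\<lambda>\<xi> \<eta> \<theta>.
      (Q \<xi> (Q' \<eta> \<theta>) + Q \<eta> (Q' \<theta> \<xi>) + Q \<theta> (Q' \<xi> \<eta>))
    - (Q' \<xi> (Q \<eta> \<theta>) + Q' \<eta> (Q \<theta> \<xi>) + Q' \<theta> (Q \<xi> \<eta>)))"

lemma vec_eq_inner: "(\<And>k. (x::'a::euclidean_space) \<bullet> k = y \<bullet> k) \<Longrightarrow> x = y"
  by (metis inner_commute vector_eq_ldot)

lemma comm_Q: "brkg (Qg a) (Qg b) x y z = 0"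
proof -
  have "brkg (Qg a) (Qg b) x y z \<bullet> k = 0 \<bullet> k" for k
    unfolding brkg_def Qg_def
    by (simp add: inner_simps algebra_simps inner_commute)
  then show ?thesis by (rule vec_eq_inner)
qed
definition AQ :: "('a::euclidean_space \<Rightarrow> 'a) \<Rightarrow> ('a \<Rightarrow> 'a \<Rightarrow> 'a) \<Rightarrow> 'a \<Rightarrow> 'a \<Rightarrow> 'a" where
  "AQ f Q = (\<lambda>\<xi> \<eta>. f (Q \<xi> \<eta>) - Q (f \<xi>) \<eta> - Q \<xi> (f \<eta>))"

lemma AQ_ker:
  assumes f: "linear f"
  shows "brkg (AQ f (Qg v)) (Qg w) x y z = brkg (AQ f (Qg w)) (Qg v) x y z"
proof -
  note L = linear_add[OF f] linear_diff[OF f] linear_scale[OF f]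
  have "brkg (AQ f (Qg v)) (Qg w) x y z \<bullet> k = brkg (AQ f (Qg w)) (Qg v) x y z \<bullet> k" for k
    unfolding brkg_def Qg_def AQ_def
    by (simp add: L inner_simps algebra_simps inner_commute)
  then show ?thesis by (rule vec_eq_inner)
qed

definition trl :: "('a::euclidean_space \<Rightarrow> 'a) \<Rightarrow> real" where
  "trl g = (\<Sum>b\<in>Basis. g b \<bullet> b)"

lemma trl_add[simp]: "trl (\<lambda>b. g b + h b) = trl g + trl h"
  by (simp add: trl_def inner_add_left sum.distrib)
lemma trl_diff[simp]: "trl (\<lambda>b. g b - h b) = trl g - trl h"
  by (simp add: trl_def inner_diff_left sum_subtractf)
lemma trl_scale[simp]: "trl (\<lambda>b. c *\<^sub>R g b) = c * trl g"
  by (simp add: trl_def sum_distrib_left)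
lemma trl_id[simp]: "trl (\<lambda>b::'a::euclidean_space. b) = real DIM('a)"
  by (simp add: trl_def)
lemma trl_i1[simp]: "trl (\<lambda>b. (b \<bullet> u) *\<^sub>R z) = u \<bullet> (z::'a::euclidean_space)"
  by (simp add: trl_def euclidean_inner[of u z] inner_commute mult.commute)
lemma trl_i2[simp]: "trl (\<lambda>b. (u \<bullet> b) *\<^sub>R z) = u \<bullet> (z::'a::euclidean_space)"
  by (simp add: trl_def euclidean_inner[of u z] inner_commute mult.commute)

lemma lin_basis_sum: "linear G \<Longrightarrow> (\<Sum>b\<in>Basis. (u \<bullet> b) *\<^sub>R G b) = G (u::'a::euclidean_space)"
proof -
  assume G: "linear G"
  have "G u = G (\<Sum>b\<in>Basis. (u \<bullet> b) *\<^sub>R b)" by (simp add: euclidean_representation)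
  also have "\<dots> = (\<Sum>b\<in>Basis. (u \<bullet> b) *\<^sub>R G b)" by (simp add: linear_sum[OF G] linear_scale[OF G])
  finally show ?thesis by simp
qed

lemma trl_l1[simp]: "linear G \<Longrightarrow> trl (\<lambda>b. (z \<bullet> G b) *\<^sub>R u) = z \<bullet> G (u::'a::euclidean_space)"
proof -
  assume G: "linear G"
  have "trl (\<lambda>b. (z \<bullet> G b) *\<^sub>R u) = z \<bullet> (\<Sum>b\<in>Basis. (u \<bullet> b) *\<^sub>R G b)"
    by (simp add: trl_def inner_sum_right mult.commute)
  then show ?thesis by (simp add: lin_basis_sum[OF G])
qed
lemma trl_l2[simp]: "linear G \<Longrightarrow> trl (\<lambda>b. (G b \<bullet> z) *\<^sub>R u) = G u \<bullet> (z::'a::euclidean_space)"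
  using trl_l1[of G z u] by (simp add: inner_commute)


definition tr2 :: "('a::euclidean_space \<Rightarrow> 'a \<Rightarrow> 'a) \<Rightarrow> 'a" where
  "tr2 G = (\<Sum>b\<in>Basis. G b b)"
definition adjv :: "('a::euclidean_space \<Rightarrow> 'a) \<Rightarrow> 'a \<Rightarrow> 'a" where
  "adjv H u = (\<Sum>b\<in>Basis. (H b \<bullet> u) *\<^sub>R b)"

lemma adjv_inner[simp]: "linear H \<Longrightarrow> adjv H u \<bullet> k = H k \<bullet> u"
proof -
  assume H: "linear H"
  have "adjv H u \<bullet> k = (\<Sum>b\<in>Basis. (H b \<bullet> u) * (b \<bullet> k))"
    by (simp add: adjv_def inner_sum_left)
  also have "\<dots> = (\<Sum>b\<in>Basis. (k \<bullet> b) *\<^sub>R H b) \<bullet> u"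
    by (simp add: inner_sum_left inner_sum_right inner_commute mult.commute)
  finally have "adjv H u \<bullet> k = (\<Sum>b\<in>Basis. (k \<bullet> b) *\<^sub>R H b) \<bullet> u" .
  then show ?thesis by (simp add: lin_basis_sum[OF H])
qed

lemma adjv_inner2[simp]: "linear H \<Longrightarrow> k \<bullet> adjv H u = H k \<bullet> u"
  using adjv_inner[of H u k] by (simp add: inner_commute)

lemma tr2_add[simp]: "tr2 (\<lambda>x y. G x y + H x y) = tr2 G + tr2 H"
  by (simp add: tr2_def sum.distrib)
lemma tr2_diff[simp]: "tr2 (\<lambda>x y. G x y - H x y) = tr2 G - tr2 H"
  by (simp add: tr2_def sum_subtractf)
lemma tr2_neg[simp]: "tr2 (\<lambda>x y. - G x y) = - tr2 G"
  by (simp add: tr2_def sum_negf)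
lemma tr2_scale[simp]: "tr2 (\<lambda>x y. c *\<^sub>R G x y) = c *\<^sub>R tr2 G"
  by (simp add: tr2_def scaleR_sum_right)
lemma tr2_dot[simp]: "tr2 (\<lambda>x y::'a::euclidean_space. (x \<bullet> y) *\<^sub>R z) = real DIM('a) *\<^sub>R z"
  by (simp add: tr2_def sum_constant_scaleR)
lemma tr2_h1[simp]: "linear H \<Longrightarrow> tr2 (\<lambda>x y. (x \<bullet> u) *\<^sub>R H y) = H (u::'a::euclidean_space)"
  by (simp add: tr2_def lin_basis_sum inner_commute[of _ u])
lemma tr2_h2[simp]: "linear H \<Longrightarrow> tr2 (\<lambda>x y. (u \<bullet> x) *\<^sub>R H y) = H (u::'a::euclidean_space)"
  by (simp add: tr2_def lin_basis_sum)
lemma tr2_h3[simp]: "linear H \<Longrightarrow> tr2 (\<lambda>x y. (y \<bullet> u) *\<^sub>R H x) = H (u::'a::euclidean_space)"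
  by (simp add: tr2_def lin_basis_sum inner_commute[of _ u])
lemma tr2_h4[simp]: "linear H \<Longrightarrow> tr2 (\<lambda>x y. (u \<bullet> y) *\<^sub>R H x) = H (u::'a::euclidean_space)"
  by (simp add: tr2_def lin_basis_sum)
lemma tr2_g1[simp]: "tr2 (\<lambda>x y. (u \<bullet> G x y) *\<^sub>R z) = (u \<bullet> tr2 G) *\<^sub>R (z::'a::euclidean_space)"
  by (simp add: tr2_def inner_sum_right scaleR_sum_left)
lemma tr2_g2[simp]: "tr2 (\<lambda>x y. (G x y \<bullet> u) *\<^sub>R z) = (tr2 G \<bullet> u) *\<^sub>R (z::'a::euclidean_space)"
  by (simp add: tr2_def inner_sum_left scaleR_sum_left)
lemma tr2_t1[simp]: "tr2 (\<lambda>x y. (y \<bullet> H x) *\<^sub>R z) = trl H *\<^sub>R (z::'a::euclidean_space)"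
  by (simp add: tr2_def trl_def scaleR_sum_left inner_commute)
lemma tr2_t2[simp]: "tr2 (\<lambda>x y. (x \<bullet> H y) *\<^sub>R z) = trl H *\<^sub>R (z::'a::euclidean_space)"
  by (simp add: tr2_def trl_def scaleR_sum_left inner_commute)
lemma tr2_t3[simp]: "tr2 (\<lambda>x y. (H x \<bullet> y) *\<^sub>R z) = trl H *\<^sub>R (z::'a::euclidean_space)"
  by (simp add: tr2_def trl_def scaleR_sum_left inner_commute)
lemma tr2_t4[simp]: "tr2 (\<lambda>x y. (H y \<bullet> x) *\<^sub>R z) = trl H *\<^sub>R (z::'a::euclidean_space)"
  by (simp add: tr2_def trl_def scaleR_sum_left inner_commute)
lemma tr2_a1[simp]: "tr2 (\<lambda>x y. (H y \<bullet> u) *\<^sub>R x) = adjv H (u::'a::euclidean_space)"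
  by (simp add: tr2_def adjv_def)
lemma tr2_a2[simp]: "tr2 (\<lambda>x y. (u \<bullet> H y) *\<^sub>R x) = adjv H (u::'a::euclidean_space)"
  by (simp add: tr2_def adjv_def inner_commute)
lemma tr2_a3[simp]: "tr2 (\<lambda>x y. (H x \<bullet> u) *\<^sub>R y) = adjv H (u::'a::euclidean_space)"
  by (simp add: tr2_def adjv_def)
lemma tr2_a4[simp]: "tr2 (\<lambda>x y. (u \<bullet> H x) *\<^sub>R y) = adjv H (u::'a::euclidean_space)"
  by (simp add: tr2_def adjv_def inner_commute)

locale kern =
  fixes Y :: "'a::euclidean_space \<Rightarrow> 'a \<Rightarrow> 'a \<Rightarrow> 'a"
  assumes L1[simp]: "linear (\<lambda>v. Y v x y)"
    and L2[simp]: "linear (\<lambda>x. Y v x y)"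
    and Ysym: "Y v x y = Y v y x"
    and K: "brkg (Y v) (Qg w) x y z = brkg (Y w) (Qg v) x y z"
    and T2: "trl (Y v x) = 0"
begin

lemma L3[simp]: "linear (Y v x)"
proof -
  have "Y v x = (\<lambda>y. Y v y x)" by (rule ext, rule Ysym)
  then show ?thesis by simp
qed

lemma T2'[simp]: "trl (Y v x) = 0" "trl (\<lambda>b. Y v b x) = 0"
  using T2 by (auto simp: Ysym[of v _ x])

lemmas Ylin = linear_add[OF L1] linear_diff[OF L1] linear_scale[OF L1] linear_neg[OF L1]
  linear_add[OF L2] linear_diff[OF L2] linear_scale[OF L2] linear_neg[OF L2]
  linear_add[OF L3] linear_diff[OF L3] linear_scale[OF L3] linear_neg[OF L3]

lemma C2exp: "trl (\<lambda>b. brkg (Y v) (Qg w) a b k) = real DIM('a) * (Y v a k \<bullet> w)"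
  unfolding brkg_def Qg_def
  by (simp add: Ylin) (simp add: inner_commute Ysym algebra_simps)

lemma stepA: "Y l a k \<bullet> m = Y m a k \<bullet> l"
proof -
  have "trl (\<lambda>b. brkg (Y l) (Qg m) a b k) = trl (\<lambda>b. brkg (Y m) (Qg l) a b k)"
    using K by simp
  then show ?thesis by (simp add: C2exp)
qed


lemma tr2_sym[simp]: "tr2 (\<lambda>x y. Y v y x) = tr2 (Y v)"
  by (simp add: tr2_def Ysym)

lemma C1exp: "tr2 (\<lambda>x y. brkg (Y v) (Qg w) a x y) \<bullet> k =
   real DIM('a) * (Y v a w \<bullet> k) + 2 * (Y v k a \<bullet> w) - (a \<bullet> w) * (tr2 (Y v) \<bullet> k)
   - (a \<bullet> tr2 (Y v)) * (w \<bullet> k) + (tr2 (Y v) \<bullet> w) * (a \<bullet> k)"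
  unfolding brkg_def Qg_def
  by (simp add: Ylin tr2_sym) (simp add: inner_simps inner_commute Ysym algebra_simps)

lemma tr1_sym: "tr2 (Y v) \<bullet> x = tr2 (Y x) \<bullet> v"
proof -
  have "tr2 (Y v) \<bullet> x = (\<Sum>b\<in>Basis. Y v b b \<bullet> x)" by (simp add: tr2_def inner_sum_left)
  also have "\<dots> = (\<Sum>b\<in>Basis. Y x b b \<bullet> v)" using stepA by simp
  also have "\<dots> = tr2 (Y x) \<bullet> v" by (simp add: tr2_def inner_sum_left)
  finally show ?thesis .
qed
end

locale kern2 = kern +
  fixes c :: real
  assumes T1: "tr2 (Y v) = c *\<^sub>R v"
begin

lemma stepB: "Y l a m = Y m a l"
proof -
  have "Y l a m \<bullet> k = Y m a l \<bullet> k" for k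
  proof -
    have "tr2 (\<lambda>x y. brkg (Y l) (Qg m) a x y) \<bullet> k = tr2 (\<lambda>x y. brkg (Y m) (Qg l) a x y) \<bullet> k"
      using K by simp
    then have "real DIM('a) * (Y l a m \<bullet> k) = real DIM('a) * (Y m a l \<bullet> k)"
      unfolding C1exp T1 using stepA[of l k a m] by (simp add: inner_commute algebra_simps)
    then show ?thesis by simp
  qed
  then show ?thesis by (rule vec_eq_inner)
qed

lemma c0: "tr2 (Y v) = 0"
proof -
  have "tr2 (Y v) \<bullet> x = 0" for x
  proof -
    have "tr2 (Y v) \<bullet> x = (\<Sum>b\<in>Basis. Y v b b \<bullet> x)" by (simp add: tr2_def inner_sum_left)
    also have "\<dots> = (\<Sum>b\<in>Basis. Y x b v \<bullet> b)" 
      by (rule sum.cong) (simp, metis stepB stepA)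
    also have "\<dots> = trl (\<lambda>b. Y x b v)" by (simp only: trl_def)
    finally show ?thesis by simp
  qed
  then show ?thesis using vec_eq_inner[of "tr2 (Y v)" 0] by simp
qed

lemma trlY0[simp]: "trl (\<lambda>b. Y b x y) = 0"
proof -
  have "trl (\<lambda>b. Y b x y) = trl (Y y x)" unfolding trl_def
    by (rule sum.cong) (simp, metis stepB)
  then show ?thesis by simp
qed

lemma stepD: "Y l a m \<bullet> k = 0"
proof -
  have "trl (\<lambda>b. brkg (Y b) (Qg m) a k l) = trl (\<lambda>b. brkg (Y m) (Qg b) a k l)"
    using K by simp
  have e0: "a \<bullet> Y m k l = Y l a m \<bullet> k" by (metis stepA stepB Ysym inner_commute)
  have e1: "Y a k l \<bullet> m = Y l a m \<bullet> k" by (metis stepA stepB Ysym inner_commute)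
  have e2: "k \<bullet> Y m l a = Y l a m \<bullet> k" by (metis stepA stepB Ysym inner_commute)
  have e3: "Y k l a \<bullet> m = Y l a m \<bullet> k" by (metis stepA stepB Ysym inner_commute)
  have e4: "l \<bullet> Y m a k = Y l a m \<bullet> k" by (metis stepA stepB Ysym inner_commute)
  have e5: "Y l a k \<bullet> m = Y l a m \<bullet> k" by (metis stepA stepB Ysym inner_commute)
  have e6: "k \<bullet> Y m a l = Y l a m \<bullet> k" by (metis stepA stepB Ysym inner_commute)
  have e7: "l \<bullet> Y m k a = Y l a m \<bullet> k" by (metis stepA stepB Ysym inner_commute)
  have e8: "a \<bullet> Y m l k = Y l a m \<bullet> k" by (metis stepA stepB Ysym inner_commute)
  have e9: "Y m k l \<bullet> a = Y l a m \<bullet> k" by (metis stepA stepB Ysym inner_commute)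
  have e10: "Y m l a \<bullet> k = Y l a m \<bullet> k" by (metis stepA stepB Ysym inner_commute)
  have e11: "Y m a k \<bullet> l = Y l a m \<bullet> k" by (metis stepA stepB Ysym inner_commute)
  have "trl (\<lambda>b. brkg (Y b) (Qg m) a k l) = trl (\<lambda>b. brkg (Y m) (Qg b) a k l)"
    using K by simp
  then have "0 = - 3 * real DIM('a) * (Y l a m \<bullet> k)"
    unfolding brkg_def Qg_def
    by (simp add: Ylin trlY0 e0 e1 e2 e3 e4 e5 e6 e7 e8 e9 e10 e11)
  then show ?thesis by simp
qed
end

lemma linear_ident'[simp]: "linear (\<lambda>x. x)"
  by (rule linearI) auto

lemma kernel_zero:
  fixes Y :: "'a::euclidean_space \<Rightarrow> 'a \<Rightarrow> 'a \<Rightarrow> 'a"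
  assumes L1: "\<And>x y. linear (\<lambda>v. Y v x y)" and L2: "\<And>v y. linear (\<lambda>x. Y v x y)"
    and Ysym: "\<And>v x y. Y v x y = Y v y x"
    and K: "\<And>v w x y z. brkg (Y v) (Qg w) x y z = brkg (Y w) (Qg v) x y z"
    and T2: "\<And>v x. trl (Y v x) = 0"
    and T1: "\<And>v x. tr2 (Y v) \<bullet> x + tr2 (Y x) \<bullet> v = 2 * c * (v \<bullet> x)"
  shows "Y v x y = 0"
proof -
  interpret kern Y by (rule kern.intro[OF L1 L2 Ysym K T2])
  have "tr2 (Y u) = c *\<^sub>R u" for u
  proof (rule vec_eq_inner)
    fix k show "tr2 (Y u) \<bullet> k = c *\<^sub>R u \<bullet> k" using T1[of u k] tr1_sym[of u k] by simp
  qed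
  then interpret kern2 Y c by unfold_locales auto
  show ?thesis using stepD[of v x y] vec_eq_inner[of "Y v x y" 0] by simp
qed

lemma rep_inner: "linear g \<Longrightarrow> x \<bullet> (\<Sum>a\<in>Basis. g a *\<^sub>R a) = g (x::'a::euclidean_space)"
proof -
  assume g: "linear g"
  have "g x = g (\<Sum>a\<in>Basis. (x \<bullet> a) *\<^sub>R a)" by (simp add: euclidean_representation)
  also have "\<dots> = (\<Sum>a\<in>Basis. (x \<bullet> a) * g a)" by (simp add: linear_sum[OF g] linear_scale[OF g])
  finally show ?thesis by (simp add: inner_sum_right mult.commute)
qed

lemma brkg_add1: "brkg (\<lambda>x y. F x y + G x y) (Qg w) a b c = brkg F (Qg w) a b c + brkg G (Qg w) a b c"
  unfolding brkg_def Qg_def by (simp add: inner_simps algebra_simps)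
lemma brkg_diff1: "brkg (\<lambda>x y. F x y - G x y) (Qg w) a b c = brkg F (Qg w) a b c - brkg G (Qg w) a b c"
  unfolding brkg_def Qg_def by (simp add: inner_simps algebra_simps)

lemma kernel_structure:
  fixes Y :: "'a::euclidean_space \<Rightarrow> 'a \<Rightarrow> 'a \<Rightarrow> 'a"
  assumes L1: "\<And>x y. linear (\<lambda>v. Y v x y)" and L2: "\<And>v y. linear (\<lambda>x. Y v x y)"
    and Ysym: "\<And>v x y. Y v x y = Y v y x"
    and K: "\<And>v w x y z. brkg (Y v) (Qg w) x y z = brkg (Y w) (Qg v) x y z"
  shows "\<exists>Af Cf. linear Af \<and> linear Cf \<and> (\<forall>v x y. Y v x y = AQ Af (Qg v) x y + Qg (Cf v) x y)"
proof -
  define n where "n = real DIM('a)"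
  have n0: "n > 0" by (simp add: n_def)
  have L3: "linear (Y v x)" for v x
  proof -
    have "Y v x = (\<lambda>y. Y v y x)" by (rule ext, rule Ysym)
    then show ?thesis using L2 by simp
  qed
  define R where "R = (\<lambda>v. (1/n) *\<^sub>R (\<Sum>a\<in>Basis. trl (Y v a) *\<^sub>R a))"
  have lintr: "linear (\<lambda>x. trl (Y v x))" for v
    by (rule linearI) (simp_all add: trl_def linear_add[OF L2] linear_scale[OF L2] inner_add_left sum.distrib sum_distrib_left)
  have Rinner: "R v \<bullet> x = trl (Y v x) / n" for x v
    using rep_inner[OF lintr[of v], of x] by (simp add: R_def inner_commute)
  have linR: "linear R"
  proof (rule linearI)
    fix u v show "R (u + v) = R u + R v"
      by (rule vec_eq_inner) (simp add: Rinner inner_add_left trl_def linear_add[OF L1] sum.distrib add_divide_distrib)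
  next
    fix c u show "R (c *\<^sub>R u) = c *\<^sub>R R u"
      by (rule vec_eq_inner) (simp add: Rinner trl_def linear_scale[OF L1] sum_distrib_left)
  qed
  define M where "M = (\<lambda>v. tr2 (Y v) + (n - 2) *\<^sub>R R v)"
  have lintr2: "linear (\<lambda>v. tr2 (Y v))"
    by (rule linearI) (simp_all add: tr2_def linear_add[OF L1] linear_scale[OF L1] sum.distrib scaleR_sum_right)
  have linM: "linear M"
    by (rule linearI) (simp_all add: M_def linear_add[OF lintr2] linear_scale[OF lintr2] linear_add[OF linR] linear_scale[OF linR] algebra_simps)
  define S where "S = (\<lambda>v. (1/(2*n)) *\<^sub>R (M v + adjv M v))"
  have Sinner: "S x \<bullet> y = (M x \<bullet> y + M y \<bullet> x) / (2*n)" for x y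
    by (simp add: S_def inner_add_left linM add_divide_distrib)
  have linS: "linear S"
  proof (rule linearI)
    fix u v show "S (u + v) = S u + S v"
      by (rule vec_eq_inner) (simp add: Sinner inner_add_left inner_add_right linear_add[OF linM] add_divide_distrib)
  next
    fix c u show "S (c *\<^sub>R u) = c *\<^sub>R S u"
      by (rule vec_eq_inner) (simp add: Sinner linear_scale[OF linM] algebra_simps add_divide_distrib)
  qed
  have Ssym: "S x \<bullet> y = S y \<bullet> x" for x y by (simp add: Sinner)
  define Af where "Af = (\<lambda>v. (1/2) *\<^sub>R S v)"
  define Cf where "Cf = (\<lambda>v. (1/2) *\<^sub>R S v - R v)"
  have linAf: "linear Af"
    by (rule linearI) (simp_all add: Af_def linear_add[OF linS] linear_scale[OF linS] algebra_simps)
  have linCf: "linear Cf"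
    by (rule linearI) (simp_all add: Cf_def linear_add[OF linS] linear_scale[OF linS]
      linear_add[OF linR] linear_scale[OF linR] algebra_simps)
  define F where "F = (\<lambda>v x y. AQ Af (Qg v) x y + Qg (Cf v) x y)"
  define D where "D = (\<lambda>v x y. Y v x y - F v x y)"
  note LA = linear_add[OF linAf] linear_diff[OF linAf] linear_scale[OF linAf]
  note LC = linear_add[OF linCf] linear_diff[OF linCf] linear_scale[OF linCf]
  have trlF: "trl (F v x) = n * (R v \<bullet> x)" for v x
    unfolding F_def AQ_def Qg_def
    by (simp add: LA linAf) (simp add: Af_def Cf_def inner_diff_left inner_diff_right inner_commute Ssym[of x v] n_def algebra_simps, metis Ssym inner_commute)
  have tr2F: "tr2 (F v) \<bullet> k = n * (S v \<bullet> k - R v \<bullet> k) - trl S * (v \<bullet> k) + 2 * (R v \<bullet> k)" for v k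
    unfolding F_def AQ_def Qg_def
    by (simp add: LA linAf inner_simps) (simp add: Af_def Cf_def inner_diff_left inner_diff_right inner_commute n_def algebra_simps, metis Ssym inner_commute)
  have D0: "D v x y = 0" for v x y
  proof (rule kernel_zero[where Y = D and c = "trl S"])
    show "linear (\<lambda>v. D v x y)" for x y
      by (rule linearI) (simp_all add: D_def F_def AQ_def Qg_def linear_add[OF L1] linear_scale[OF L1] LA LC
          inner_simps algebra_simps)
    show "linear (\<lambda>x. D v x y)" for v y
      by (rule linearI) (simp_all add: D_def F_def AQ_def Qg_def linear_add[OF L2] linear_scale[OF L2] LA LC
          inner_simps algebra_simps)
    show "D v x y = D v y x" for v x y
      by (simp add: D_def F_def AQ_def Qg_def Ysym[of v x y] inner_commute algebra_simps)
    show "brkg (D v) (Qg w) x y z = brkg (D w) (Qg v) x y z" for v w x y z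
      by (simp add: D_def F_def brkg_diff1 brkg_add1 comm_Q K[of v w] AQ_ker[OF linAf, of v w])
    show "trl (D v x) = 0" for v x
      using n0 by (simp add: D_def trlF Rinner)
    show "tr2 (D v) \<bullet> x + tr2 (D x) \<bullet> v = 2 * trl S * (v \<bullet> x)" for v x
    proof -
      have e: "tr2 (Y u) \<bullet> k = M u \<bullet> k - (n - 2) * (R u \<bullet> k)" for u k
        by (simp add: M_def inner_add_left)
      show ?thesis
        using n0 by (simp add: D_def tr2F e Sinner inner_diff_left field_simps inner_commute[of x v])
    qed
  qed
  show ?thesis
    by (rule exI[of _ Af], rule exI[of _ Cf]) (use D0 linAf linCf in \<open>auto simp: D_def F_def\<close>)
qed


lemma Qv_Qg: "Qv v = Qg v" by (simp add: Qv_def Qg_def)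
lemma brk_brkg: "brk Q Q' = brkg Q Q'" by (simp add: brk_def brkg_def)

lemma LPhi_eq: "LPhi B A' B' i = (\<lambda>x y. AQ (\<lambda>x. A' *v x) (Qg (column i B)) x y + Qg (column i B') x y)"
  by (simp add: LPhi_def AQ_def Qv_Qg fun_eq_iff)

lemma LPsi_eq: "LPsi B q i j = (\<lambda>x y z. brkg (q i) (Qg (column j B)) x y z - brkg (q j) (Qg (column i B)) x y z)"
  by (simp add: LPsi_def Qv_Qg brk_brkg)

lemma AQ_S2:
  fixes f :: "real^'n::finite \<Rightarrow> real^'n"
  assumes f: "linear f"
  shows "(\<lambda>x y. AQ f (Qg v) x y + Qg w x y) \<in> S2"
proof -
  note L = linear_add[OF f] linear_diff[OF f] linear_scale[OF f]
  have "bilinear (\<lambda>x y. AQ f (Qg v) x y + Qg w x y)"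
    unfolding bilinear_def
    by (auto intro!: linearI simp: AQ_def Qg_def L inner_simps algebra_simps)
  moreover have "AQ f (Qg v) x y + Qg w x y = AQ f (Qg v) y x + Qg w y x" for x y
    by (simp add: AQ_def Qg_def inner_commute algebra_simps)
  ultimately show ?thesis by (simp add: S2_def)
qed

lemma brkg_scale1: "brkg (\<lambda>x y. c *\<^sub>R F x y) (Qg w) a b d = c *\<^sub>R brkg F (Qg w) a b d"
  unfolding brkg_def Qg_def by (simp add: inner_simps algebra_simps)

lemma brkg_sum1:
  assumes "finite I"
  shows "brkg (\<lambda>x y. \<Sum>i\<in>I. c i *\<^sub>R F i x y) (Qg w) a b d = (\<Sum>i\<in>I. c i *\<^sub>R brkg (F i) (Qg w) a b d)"
  using assms
proof (induction I rule: finite_induct)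
  case empty
  then show ?case by (simp add: brkg_def Qg_def)
next
  case (insert i I)
  then show ?case by (simp add: brkg_add1 brkg_scale1)
qed

lemma brkg_lin2:
  assumes Q: "bilinear Q"
  shows "linear (\<lambda>w. brkg Q (Qg w) a b d)"
  by (rule linearI) (simp_all add: brkg_def Qg_def bilinear_radd[OF Q] bilinear_rmul[OF Q] bilinear_rsub[OF Q]
     bilinear_ladd[OF Q] bilinear_lmul[OF Q] bilinear_lsub[OF Q] inner_simps algebra_simps)

lemma column_mult: "column i (A ** (B::real^'n^'n)) = A *v column i B"
  by (simp add: column_def matrix_matrix_mult_def matrix_vector_mult_def vec_eq_iff)

theorem proposition2p8:
  fixes B :: "(real^('n::{finite,linorder}))^('n::{finite,linorder})"
  assumes "invertible B"
  shows "kerLPsi B = imLPhi B"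
proof
  show "imLPhi B \<subseteq> kerLPsi B"
  proof
    fix q assume "q \<in> imLPhi B"
    then obtain A' B' where q: "q = LPhi B A' B'" by (auto simp: imLPhi_def)
    have lA: "linear (\<lambda>x. A' *v x)" by simp
    have "q i \<in> S2" for i unfolding q LPhi_eq by (rule AQ_S2[OF lA])
    moreover have "LPsi B q i j = (\<lambda>\<xi> \<eta> \<theta>. 0)" for i j
      unfolding q LPsi_eq LPhi_eq
      by (simp add: brkg_add1 comm_Q AQ_ker[OF lA] fun_eq_iff)
    ultimately show "q \<in> kerLPsi B" by (simp add: kerLPsi_def)
  qed
next
  show "kerLPsi B \<subseteq> imLPhi B"
  proof
    fix q assume "q \<in> kerLPsi B"
    then have qS2: "\<And>i. q i \<in> S2" and qK: "\<And>i j. i < j \<Longrightarrow> LPsi B q i j = (\<lambda>\<xi> \<eta> \<theta>. 0)"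
      by (auto simp: kerLPsi_def)
    have bil: "bilinear (q i)" and qsym: "q i x y = q i y x" for i x y
      using qS2[of i] by (auto simp: S2_def)
    obtain Bi where BBi: "B ** Bi = mat 1" and BiB: "Bi ** B = mat 1"
      using assms by (auto simp: invertible_def)
    define u where "u = (\<lambda>j. column j B)"
    have gsym: "brkg (q i) (Qg (u j)) x y z = brkg (q j) (Qg (u i)) x y z" for i j x y z
    proof (cases i j rule: linorder_cases)
      case less
      from fun_cong[OF fun_cong[OF fun_cong[OF qK[OF less]]], of x y z] show ?thesis
        by (simp add: LPsi_eq u_def)
    next
      case equal then show ?thesis by simp
    next
      case greater
      from fun_cong[OF fun_cong[OF fun_cong[OF qK[OF greater]]], of x y z] show ?thesis
        by (simp add: LPsi_eq u_def)
    qed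
    define c where "c = (\<lambda>v j. (Bi *v v) $ j)"
    define Y where "Y = (\<lambda>v x y. \<Sum>j\<in>UNIV. c v j *\<^sub>R q j x y)"
    have vrep: "w = (\<Sum>j\<in>UNIV. c w j *\<^sub>R u j)" for w
    proof -
      have "w = B *v (Bi *v w)" by (simp add: matrix_vector_mul_assoc BBi)
      also have "\<dots> = (\<Sum>j\<in>UNIV. c w j *\<^sub>R u j)"
        by (simp add: matrix_mult_sum c_def u_def scalar_mult_eq_scaleR)
      finally show ?thesis .
    qed
    have Yu: "Y (u i) = q i" for i
    proof -
      have "Bi *v u i = axis i 1"
        by (simp add: u_def matrix_vector_mult_basis[symmetric] matrix_vector_mul_assoc BiB)
      moreover have "(if P then 1 else (0::real)) *\<^sub>R x = (if P then x else 0)" for P and x :: "real^'n::{finite,linorder}"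
        by simp
      ultimately show ?thesis
        by (simp add: Y_def c_def fun_eq_iff axis_def)
    qed
    have L1: "linear (\<lambda>v. Y v x y)" for x y
      by (rule linearI) (simp_all add: Y_def c_def matrix_vector_right_distrib scaleR_add_left sum.distrib
          scaleR_sum_right linear_scale[OF matrix_vector_mul_linear])
    have L2: "linear (\<lambda>x. Y v x y)" for v y
      by (rule linearI) (simp_all add: Y_def bilinear_ladd[OF bil] bilinear_lmul[OF bil] scaleR_add_right
          sum.distrib scaleR_sum_right mult.commute)
    have Ysym: "Y v x y = Y v y x" for v x y
      by (simp add: Y_def qsym[of _ x y])
    have e: "brkg (Y v) (Qg w) x y z = (\<Sum>i\<in>UNIV. \<Sum>j\<in>UNIV. (c v i * c w j) *\<^sub>R brkg (q i) (Qg (u j)) x y z)"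
      for v w x y z
    proof -
      have "brkg (Y v) (Qg w) x y z = (\<Sum>i\<in>UNIV. c v i *\<^sub>R brkg (q i) (Qg w) x y z)"
        unfolding Y_def by (rule brkg_sum1) simp
      also have "\<dots> = (\<Sum>i\<in>UNIV. c v i *\<^sub>R (\<Sum>j\<in>UNIV. c w j *\<^sub>R brkg (q i) (Qg (u j)) x y z))"
      proof (rule sum.cong[OF refl])
        fix i
        have "Qg w = Qg (\<Sum>j\<in>UNIV. c w j *\<^sub>R u j)" by (rule arg_cong[OF vrep])
        then have "brkg (q i) (Qg w) x y z = brkg (q i) (Qg (\<Sum>j\<in>UNIV. c w j *\<^sub>R u j)) x y z" by simp
        also have "\<dots> = (\<Sum>j\<in>UNIV. c w j *\<^sub>R brkg (q i) (Qg (u j)) x y z)"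
          by (simp add: linear_sum[OF brkg_lin2[OF bil]] linear_scale[OF brkg_lin2[OF bil]])
        finally show "c v i *\<^sub>R brkg (q i) (Qg w) x y z = c v i *\<^sub>R (\<Sum>j\<in>UNIV. c w j *\<^sub>R brkg (q i) (Qg (u j)) x y z)"
          by simp
      qed
      also have "\<dots> = (\<Sum>i\<in>UNIV. \<Sum>j\<in>UNIV. (c v i * c w j) *\<^sub>R brkg (q i) (Qg (u j)) x y z)"
        by (simp add: scaleR_sum_right)
      finally show ?thesis .
    qed
    have K: "brkg (Y v) (Qg w) x y z = brkg (Y w) (Qg v) x y z" for v w x y z
    proof -
      have "brkg (Y w) (Qg v) x y z = (\<Sum>i\<in>UNIV. \<Sum>j\<in>UNIV. (c w i * c v j) *\<^sub>R brkg (q i) (Qg (u j)) x y z)"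
        by (rule e)
      also have "\<dots> = (\<Sum>j\<in>UNIV. \<Sum>i\<in>UNIV. (c w i * c v j) *\<^sub>R brkg (q i) (Qg (u j)) x y z)"
        by (rule sum.swap)
      also have "\<dots> = (\<Sum>j\<in>UNIV. \<Sum>i\<in>UNIV. (c v j * c w i) *\<^sub>R brkg (q j) (Qg (u i)) x y z)"
        by (simp add: gsym[of _ _ x y z] mult.commute)
      finally show ?thesis by (simp add: e)
    qed
    obtain Af Cf where lAf: "linear Af" and lCf: "linear Cf"
      and YF: "\<And>v x y. Y v x y = AQ Af (Qg v) x y + Qg (Cf v) x y"
      using kernel_structure[of Y, OF L1 L2 Ysym K] by blast
    have mA: "(\<lambda>x. matrix Af *v x) = Af" using lAf by simp
    have mC: "matrix Cf *v x = Cf x" for x using fun_cong[OF matrix_vector_mul(2)[OF lCf]] by simp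
    have "q = LPhi B (matrix Af) (matrix Cf ** B)"
    proof (rule ext)+
      fix i x y
      have "q i x y = Y (u i) x y" by (simp add: Yu)
      also have "\<dots> = LPhi B (matrix Af) (matrix Cf ** B) i x y"
        by (simp add: YF LPhi_eq mA column_mult mC u_def)
      finally show "q i x y = LPhi B (matrix Af) (matrix Cf ** B) i x y" .
    qed
    then show "q \<in> imLPhi B" by (auto simp: imLPhi_def)
  qed
qed

end
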